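(* Consider a SOCO problem with decision space $F=[x_L,x_H]$ and a sequence of discrete systems, indexed by $i$, whose state spacings $\delta_i$ tend to $0$ and each of which has $[x_1,x_m]=F$. Let $OPT_D^i$ be the optimal cost in the $i$-th discrete system and $OPT_C$ the optimal cost in the continuous system, both under the norm $N$. Then $\lim_{i\to\infty}|OPT_D^i-OPT_C|=0$.
   Context: $F=[x_L,x_H]\subseteq\mathbb{R}^+$; $\|\cdot\|$ a norm on $\mathbb{R}$; $\theta\ge1$, $N(\cdot)=\theta\|\cdot\|$; cost functions $c^1,\dots,c^T:F\to\mathbb{R}^+$ convex (finite on $F$) with uniformly bounded subgradients; horizon $T$ fixed. A discrete system is a set of states $M=\{x_1<\dots<x_m\}\subseteq F$ with equal spacing $\delta=x_{k+1}-x_k$, $x_1=x_L$, $x_m=x_H$. The optimal cost over a state set $S$ ($S=M$ or $S=F$) under norm $N$ is $\min_{(x^1,\dots,x^T)\in S^T}\sum_{t=1}^Tc^t(x^t)+N(x^t-x^{t-1})$ with $x^0=0$. *)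

theory Defs
  imports "HOL-Analysis.Analysis"
begin

definition is_norm_on_real :: "(real \<Rightarrow> real) \<Rightarrow> bool" where
  "is_norm_on_real nrm \<longleftrightarrow>
     (\<forall>x. 0 \<le> nrm x) \<and> (\<forall>x. nrm x = 0 \<longleftrightarrow> x = 0) \<and>
     (\<forall>a x. nrm (a * x) = \<bar>a\<bar> * nrm x) \<and>
     (\<forall>x y. nrm (x + y) \<le> nrm x + nrm y)"

definition is_subgradient :: "(real \<Rightarrow> real) \<Rightarrow> real set \<Rightarrow> real \<Rightarrow> real \<Rightarrow> bool" where
  "is_subgradient f F x g \<longleftrightarrow> (\<forall>y\<in>F. f x + g * (y - x) \<le> f y)"

text \<open>Total cost of a trajectory X (X 0 is the initial state, X 1 .. X T the decisions).\<close>
definition soco_cost :: "(nat \<Rightarrow> real \<Rightarrow> real) \<Rightarrow> (real \<Rightarrow> real) \<Rightarrow> nat \<Rightarrow> (nat \<Rightarrow> real) \<Rightarrow> real" where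
  "soco_cost c N T X = (\<Sum>t = 1..T. c t (X t) + N (X t - X (t - 1)))"

definition soco_opt :: "(nat \<Rightarrow> real \<Rightarrow> real) \<Rightarrow> (real \<Rightarrow> real) \<Rightarrow> nat \<Rightarrow> real set \<Rightarrow> real" where
  "soco_opt c N T S = Inf {soco_cost c N T X | X. X 0 = 0 \<and> (\<forall>t\<in>{1..T}. X t \<in> S)}"

definition is_discrete_system :: "real \<Rightarrow> real \<Rightarrow> real \<Rightarrow> real set \<Rightarrow> bool" where
  "is_discrete_system xL xH \<delta> M \<longleftrightarrow>
     0 < \<delta> \<and> (\<exists>m::nat. 1 \<le> m \<and> M = {xL + real k * \<delta> | k. k < m} \<and>
                         xL + real (m - 1) * \<delta> = xH)"

end

theory Submission
  imports Defs
begin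

lemma norm_lin:
  assumes "is_norm_on_real nrm"
  shows "nrm z = \<bar>z\<bar> * nrm 1"
  using assms unfolding is_norm_on_real_def by (metis mult.right_neutral)

lemma round_grid:
  assumes "is_discrete_system xL xH d M" "x \<in> {xL..xH}"
  shows "\<exists>y\<in>M. y \<le> x \<and> x - d < y"
proof -
  from assms(1) obtain m :: nat where d: "0 < d" and m: "1 \<le> m" "M = {xL + real k * d | k. k < m}"
    "xL + real (m - 1) * d = xH" unfolding is_discrete_system_def by blast
  define k where "k = nat (floor ((x - xL) / d))"
  have q0: "0 \<le> (x - xL) / d" using assms(2) d by auto
  have rk: "real k = of_int (floor ((x - xL) / d))" unfolding k_def using q0 by simp
  have k1: "real k \<le> (x - xL) / d" using rk by linarith
  have k2: "(x - xL) / d < real k + 1" using rk by linarith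
  have "(x - xL) / d \<le> real (m - 1)"
    using assms(2) d m(3) by (simp add: divide_le_eq mult.commute)
  hence "real k \<le> real (m - 1)" using k1 by linarith
  hence "k < m" using m(1) by linarith
  hence mem: "xL + real k * d \<in> M" using m(2) by blast
  have "real k * d \<le> x - xL" using k1 d by (simp add: le_divide_eq)
  moreover have "x - xL < (real k + 1) * d" using k2 d by (simp add: divide_less_eq)
  ultimately show ?thesis using mem by (intro bexI[of _ "xL + real k * d"]) (auto simp: algebra_simps)
qed

lemma disc_sub:
  assumes "is_discrete_system xL xH d M"
  shows "M \<subseteq> {xL..xH}"
proof
  fix y assume "y \<in> M"
  from assms obtain m :: nat where d: "0 < d" and m: "1 \<le> m" "M = {xL + real k * d | k. k < m}"
    "xL + real (m - 1) * d = xH" unfolding is_discrete_system_def by blast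
  then obtain k where k: "k < m" "y = xL + real k * d" using \<open>y \<in> M\<close> by blast
  have "real k \<le> real (m - 1)" using k by linarith
  hence "real k * d \<le> real (m-1) * d" using d by (simp add: mult_right_mono)
  thus "y \<in> {xL..xH}" using k d m(3) by auto
qed

theorem lemma12:
  fixes xL xH \<theta> :: real and nrm :: "real \<Rightarrow> real" and c :: "nat \<Rightarrow> real \<Rightarrow> real"
    and T :: nat and \<delta> :: "nat \<Rightarrow> real" and M :: "nat \<Rightarrow> real set"
  assumes F_pos: "0 \<le> xL" and F_int: "xL \<le> xH"
    and nrm: "is_norm_on_real nrm" and theta: "1 \<le> \<theta>"
    and c_convex: "\<And>t. t \<in> {1..T} \<Longrightarrow> convex_on {xL..xH} (c t)"
    and c_nonneg: "\<And>t x. t \<in> {1..T} \<Longrightarrow> x \<in> {xL..xH} \<Longrightarrow> 0 \<le> c t x"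
    and c_subgrad: "\<exists>G. \<forall>t\<in>{1..T}. \<forall>x\<in>{xL..xH}.
                      \<exists>g. \<bar>g\<bar> \<le> G \<and> is_subgradient (c t) {xL..xH} x g"
    and disc: "\<And>i. is_discrete_system xL xH (\<delta> i) (M i)"
    and delta_lim: "\<delta> \<longlonglongrightarrow> 0"
  shows "(\<lambda>i. \<bar>soco_opt c (\<lambda>z. \<theta> * nrm z) T (M i)
               - soco_opt c (\<lambda>z. \<theta> * nrm z) T {xL..xH}\<bar>) \<longlonglongrightarrow> 0"
proof -
  obtain G where G: "\<forall>t\<in>{1..T}. \<forall>x\<in>{xL..xH}.
                      \<exists>g. \<bar>g\<bar> \<le> G \<and> is_subgradient (c t) {xL..xH} x g" using c_subgrad by blast
  define K where "K = \<theta> * nrm 1"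
  have n1: "0 \<le> nrm 1" using nrm unfolding is_norm_on_real_def by auto
  have K0: "0 \<le> K" unfolding K_def using n1 theta by simp
  define N where "N = (\<lambda>z. \<theta> * nrm z)"
  have NK: "N z = K * \<bar>z\<bar>" for z unfolding N_def K_def using norm_lin[OF nrm, of z] by simp
  define S where "S A = {soco_cost c N T X | X. X 0 = 0 \<and> (\<forall>t\<in>{1..T}. X t \<in> A)}" for A
  have opt: "soco_opt c N T A = Inf (S A)" for A unfolding soco_opt_def S_def by simp
  have cost_nonneg: "0 \<le> soco_cost c N T X" if "\<forall>t\<in>{1..T}. X t \<in> {xL..xH}" for X
    unfolding soco_cost_def using that c_nonneg K0 by (intro sum_nonneg) (auto simp: NK)
  have bdd: "bdd_below (S A)" if "A \<subseteq> {xL..xH}" for A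
    unfolding S_def bdd_below_def using cost_nonneg that by blast
  have G0: "0 \<le> G" if "T \<ge> 1"
  proof -
    have "1 \<in> {1..T}" "xL \<in> {xL..xH}" using that F_int by auto
    then obtain g where "\<bar>g\<bar> \<le> G" using G by blast
    thus ?thesis by linarith
  qed
  define L where "L = real T * (G + 2 * K)"
  have L0: "0 \<le> L"
  proof (cases "T \<ge> 1")
    case True thus ?thesis unfolding L_def using G0 K0 by simp
  next
    case False hence "T = 0" by simp
    thus ?thesis unfolding L_def by simp
  qed
  have key: "Inf (S (M i)) \<le> Inf (S {xL..xH}) + L * \<delta> i"
            "Inf (S {xL..xH}) \<le> Inf (S (M i))" for i
  proof -
    have sub: "M i \<subseteq> {xL..xH}" using disc_sub[OF disc] .
    have neC: "S {xL..xH} \<noteq> {}" unfolding S_def using F_int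
      by (auto intro!: exI[of _ "\<lambda>t. if t = 0 then 0 else xL"])
    have bM: "bdd_below (S (M i))" using bdd sub .
    have step: "Inf (S (M i)) - L * \<delta> i \<le> v" if vS: "v \<in> S {xL..xH}" for v
    proof -
      obtain X where X: "v = soco_cost c N T X" "X 0 = 0" "\<forall>t\<in>{1..T}. X t \<in> {xL..xH}"
        using vS unfolding S_def by blast
      have "\<forall>t\<in>{1..T}. \<exists>y\<in>M i. y \<le> X t \<and> X t - \<delta> i < y"
        using round_grid[OF disc] X(3) by blast
      then obtain r where r: "\<forall>t\<in>{1..T}. r t \<in> M i \<and> r t \<le> X t \<and> X t - \<delta> i < r t"
        by metis
      define Y where "Y t = (if t = 0 then 0 else r t)" for t
      have dpos: "0 < \<delta> i" using disc[of i] unfolding is_discrete_system_def by auto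
      have Yc: "\<bar>Y t - X t\<bar> \<le> \<delta> i" if tT: "t \<le> T" for t
      proof (cases "t = 0")
        case True thus ?thesis using X(2) dpos unfolding Y_def by simp
      next
        case False
        hence "t \<in> {1..T}" using tT by auto
        hence "r t \<le> X t" "X t - \<delta> i < r t" using r by auto
        thus ?thesis using False unfolding Y_def by simp
      qed
      have YM: "\<forall>t\<in>{1..T}. Y t \<in> M i" using r unfolding Y_def by auto
      have trm: "c t (Y t) + N (Y t - Y (t - 1)) \<le> c t (X t) + N (X t - X (t - 1)) + (G + 2*K) * \<delta> i"
        if t: "t \<in> {1..T}" for t
      proof -
        have Yt: "Y t \<in> {xL..xH}" using YM sub t by blast
        have Xt: "X t \<in> {xL..xH}" using X(3) t by auto
        obtain g where g: "\<bar>g\<bar> \<le> G" "is_subgradient (c t) {xL..xH} (Y t) g" using G t Yt by blast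
        have "c t (Y t) + g * (X t - Y t) \<le> c t (X t)" using g(2) Xt unfolding is_subgradient_def by blast
        moreover have "- (g * (X t - Y t)) \<le> G * \<delta> i"
        proof -
          have "- (g * (X t - Y t)) \<le> \<bar>g\<bar> * \<bar>X t - Y t\<bar>" by (simp add: abs_mult[symmetric])
          also have "\<dots> \<le> G * \<delta> i" using g(1) Yc[of t] t by (intro mult_mono) (auto simp: abs_minus_commute)
          finally show ?thesis .
        qed
        ultimately have c1: "c t (Y t) \<le> c t (X t) + G * \<delta> i" by linarith
        have a1: "\<bar>Y t - X t\<bar> \<le> \<delta> i" "\<bar>Y (t-1) - X (t-1)\<bar> \<le> \<delta> i" using Yc t by auto
        have "\<bar>Y t - Y (t - 1)\<bar> \<le> \<bar>X t - X (t - 1)\<bar> + 2 * \<delta> i" using a1 by linarith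
        hence "K * \<bar>Y t - Y (t - 1)\<bar> \<le> K * (\<bar>X t - X (t - 1)\<bar> + 2 * \<delta> i)"
          using K0 by (simp add: mult_left_mono)
        thus ?thesis using c1 by (simp add: NK algebra_simps)
      qed
      have "soco_cost c N T Y \<le> (\<Sum>t = 1..T. c t (X t) + N (X t - X (t - 1)) + (G + 2*K) * \<delta> i)"
        unfolding soco_cost_def by (rule sum_mono) (rule trm)
      also have "\<dots> = v + L * \<delta> i" unfolding X(1) soco_cost_def L_def by (simp add: sum.distrib)
      finally have "soco_cost c N T Y \<le> v + L * \<delta> i" .
      moreover have "soco_cost c N T Y \<in> S (M i)" unfolding S_def using YM Y_def by auto
      ultimately have "Inf (S (M i)) \<le> v + L * \<delta> i" using bM by (meson cInf_lower order_trans)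
      thus ?thesis by linarith
    qed
    have "Inf (S (M i)) - L * \<delta> i \<le> Inf (S {xL..xH})"
      using neC step by (intro cInf_greatest) auto
    thus "Inf (S (M i)) \<le> Inf (S {xL..xH}) + L * \<delta> i" by linarith
    have neM: "S (M i) \<noteq> {}"
    proof -
      obtain y where "y \<in> M i" using round_grid[OF disc, of xL i] F_int by auto
      thus ?thesis unfolding S_def by (auto intro!: exI[of _ "\<lambda>t. if t = 0 then 0 else y"])
    qed
    have "S (M i) \<subseteq> S {xL..xH}" unfolding S_def using sub by blast
    thus "Inf (S {xL..xH}) \<le> Inf (S (M i))"
      using neM bdd[of "{xL..xH}"] by (intro cInf_superset_mono) auto
  qed
  have lim: "(\<lambda>i. L * \<delta> i) \<longlonglongrightarrow> 0" using tendsto_mult_right_zero[OF delta_lim] by simp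
  show ?thesis unfolding N_def[symmetric] opt
  proof (rule tendsto_sandwich[OF _ _ tendsto_const lim])
    show "\<forall>\<^sub>F i in sequentially. 0 \<le> \<bar>Inf (S (M i)) - Inf (S {xL..xH})\<bar>" by simp
    show "\<forall>\<^sub>F i in sequentially. \<bar>Inf (S (M i)) - Inf (S {xL..xH})\<bar> \<le> L * \<delta> i"
      using key by (intro always_eventually allI) (smt (verit))
  qed
qed

end
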